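(* Let $X$ be the compact symplectic toric manifold determined by a moment polytope $P=\bigcap_{j=1}^m\{\mathbf{u}\in\mathbb{R}^n : \ell_j(\mathbf{u})\ge 0\}\subset\mathbb{R}^n$, where $\ell_j(\mathbf{u})=\langle \mathbf{u},\mathbf{v}_j\rangle-\lambda_j$. For a point $\mathbf{u}$ in the interior of $P$, the following are equivalent: (1) The toric fiber $L(\mathbf{u})$ is strongly bulk-balanced. (2) $\mathbf{u}\in\mathrm{Trop}(P,\mathbf{m})$ for every lattice point $\mathbf{m}\in\mathbb{Z}^n$. (3) $\mathbf{u}\in\mathrm{Trop}(P,\mathbf{m})$ for every primitive lattice point $\mathbf{m}\in\mathbb{Z}^n$ that is orthogonal to some $(n-1)$-dimensional subspace of $\mathbb{R}^n$ spanned by facet normal vectors $\mathbf{v}_j$ of $P$.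
   Context: The moment polytope is written uniquely as $P=\bigcap_{j=1}^m\{\mathbf{u}: \langle\mathbf{u},\mathbf{v}_j\rangle\ge\lambda_j\}$ with $\mathbf{v}_j\in\mathbb{Z}^n$ primitive inward normals and the intersection non-redundant (each half-space bounds a distinct facet); $\ell_j(\mathbf{u}):=\langle\mathbf{u},\mathbf{v}_j\rangle-\lambda_j$. $L(\mathbf{u})$ denotes the Lagrangian torus fiber of the moment map over $\mathbf{u}$. Tropicalization relative to $\mathbf{m}\in\mathbb{Z}^n$: $\mathrm{Trop}(P,\mathbf{m})$ is the non-differentiable locus of the piecewise-linear function $\mathbf{u}\mapsto\min\{\ell_j(\mathbf{u}) : \langle\mathbf{m},\mathbf{v}_j\rangle\neq0\}$; equivalently the set of $\mathbf{u}$ at which this minimum is attained by at least two distinct indices $j_1\ne j_2$ with $\langle \mathbf{m},\mathbf{v}_{j_1}\rangle\neq 0\neq\langle \mathbf{m},\mathbf{v}_{j_2}\rangle$. By convention $\mathrm{Trop}(P,\mathbf{0})=\mathbb{R}^n$. Strongly bulk-balanced: for $\mathbf{u}\in\mathrm{Int}(P)$ let $S_1<S_2<\cdots$ be the distinct values among $\ell_1(\mathbf{u}),\dots,\ell_m(\mathbf{u})$ and $I_l=\{j:\ell_j(\mathbf{u})=S_l\}$. Let $A_l^\perp=\mathrm{span}_\mathbb{R}\{\mathbf{v}_j : j\in I_1\cup\dots\cup I_l\}$ ($A_0^\perp=0$), $d_l=\dim A_l^\perp-\dim A_{l-1}^\perp$, and $\kappa$ the smallest $l$ with $A_l^\perp=\mathbb{R}^n$.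 Choose vectors $e^*_{r,s}\in\mathbb{Q}^n$ ($1\le r\le\kappa$, $1\le s\le d_r$) such that for each $l$, $\{e^*_{r,s}: r\le l\}$ is a $\mathbb{Q}$-basis of $A_l^\perp\cap\mathbb{Q}^n$, and every $\mathbf{v}_j$ lies in $\bigoplus_{r,s}\mathbb{Z}e^*_{r,s}$. Write $\mathbf{v}_j=\sum_{r,s}v_j^{r,s}e^*_{r,s}$ and $\mathbf{y}^{\mathbf{v}_j}=\prod_{r,s}y_{r,s}^{v_j^{r,s}}$ in variables $y_{r,s}$. For $c=(c_1,\dots,c_m)\in(\mathbb{C}^* )^m$ and $1\le l\le\kappa$ put $F^c_l(\mathbf{y})=\sum_{j\in I_l}c_j\,\mathbf{y}^{\mathbf{v}_j}$. The generalized leading term equation (for $c$) is the system $y_{l,s}\,\partial F^c_l/\partial y_{l,s}=0$ for all $1\le l\le\kappa$, $1\le s\le d_l$. The fiber $L(\mathbf{u})$ is strongly bulk-balanced if for some $c\in(\mathbb{C}^* )^m$ this system has a solution $(y_{r,s})\in(\mathbb{C}^* )^n$ (whether such a solution exists does not depend on the choice of the vectors $e^*_{r,s}$). *)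

theory Defs
  imports "HOL-Analysis.Analysis"
begin

text \<open>Vectors of R^n are modelled as real^'n with a finite index type 'n (n = CARD('n)).
  The polytope has m facets indexed by 0..m-1; v j are the inward normals, lam j the constants.\<close>

definition lattice_pt :: "real^'n \<Rightarrow> bool" where
  "lattice_pt x \<longleftrightarrow> (\<forall>i. x $ i \<in> \<int>)"

definition rational_pt :: "real^'n \<Rightarrow> bool" where
  "rational_pt x \<longleftrightarrow> (\<forall>i. x $ i \<in> \<rat>)"

definition primitive_pt :: "real^'n \<Rightarrow> bool" where
  "primitive_pt x \<longleftrightarrow> lattice_pt x \<and> x \<noteq> 0 \<and>
     (\<forall>d::int. d \<ge> 1 \<and> lattice_pt ((1 / of_int d) *\<^sub>R x) \<longrightarrow> d = 1)"

definition ell :: "(nat \<Rightarrow> real^'n) \<Rightarrow> (nat \<Rightarrow> real) \<Rightarrow> nat \<Rightarrow> real^'n \<Rightarrow> real" where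
  "ell v lam j u = u \<bullet> v j - lam j"

definition polytope :: "(nat \<Rightarrow> real^'n) \<Rightarrow> (nat \<Rightarrow> real) \<Rightarrow> nat \<Rightarrow> (real^'n) set" where
  "polytope v lam m = {u. \<forall>j<m. ell v lam j u \<ge> 0}"

text \<open>Standing assumptions: P is the moment polytope of a compact symplectic toric manifold
  (a Delzant polytope) written with primitive integral inward normals and non-redundantly,
  each half-space bounding a distinct facet.\<close>

definition delzant_presentation :: "(nat \<Rightarrow> real^'n) \<Rightarrow> (nat \<Rightarrow> real) \<Rightarrow> nat \<Rightarrow> bool" where
  "delzant_presentation v lam m \<longleftrightarrow>
     bounded (polytope v lam m) \<and> interior (polytope v lam m) \<noteq> {} \<and>
     (\<forall>j<m. primitive_pt (v j)) \<and>
     (\<forall>j<m. \<exists>u\<in>polytope v lam m. ell v lam j u = 0 \<and>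
              (\<forall>i<m. i \<noteq> j \<longrightarrow> ell v lam i u > 0)) \<and>
     (\<forall>w\<in>polytope v lam m.
        let J = {j. j < m \<and> ell v lam j w = 0} in
        span (v ` J) = UNIV \<longrightarrow>
          card J = CARD('n) \<and>
          (\<forall>z. lattice_pt z \<longrightarrow> (\<exists>c::nat \<Rightarrow> int. z = (\<Sum>j\<in>J. of_int (c j) *\<^sub>R v j))))"

definition trop :: "(nat \<Rightarrow> real^'n) \<Rightarrow> (nat \<Rightarrow> real) \<Rightarrow> nat \<Rightarrow> real^'n \<Rightarrow> (real^'n) set" where
  "trop v lam m mm =
     (if mm = 0 then UNIV
      else {u. \<exists>j1 j2. j1 < m \<and> j2 < m \<and> j1 \<noteq> j2 \<and>
                 mm \<bullet> v j1 \<noteq> 0 \<and> mm \<bullet> v j2 \<noteq> 0 \<and>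
                 ell v lam j1 u = ell v lam j2 u \<and>
                 (\<forall>j<m. mm \<bullet> v j \<noteq> 0 \<longrightarrow> ell v lam j1 u \<le> ell v lam j u)})"

text \<open>Level data at a point u: S l is the l-th smallest value (l \<ge> 1) among the ell j u,
  I l the indices attaining it, Aperp l the span of the normals in levels 1..l, kappa the first
  level where Aperp is everything.\<close>

definition lev_vals :: "(nat \<Rightarrow> real^'n) \<Rightarrow> (nat \<Rightarrow> real) \<Rightarrow> nat \<Rightarrow> real^'n \<Rightarrow> real list" where
  "lev_vals v lam m u = sorted_list_of_set ((\<lambda>j. ell v lam j u) ` {..<m})"

definition lev_I :: "(nat \<Rightarrow> real^'n) \<Rightarrow> (nat \<Rightarrow> real) \<Rightarrow> nat \<Rightarrow> real^'n \<Rightarrow> nat \<Rightarrow> nat set" where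
  "lev_I v lam m u l = {j. j < m \<and> ell v lam j u = lev_vals v lam m u ! (l - 1)}"

definition Aperp :: "(nat \<Rightarrow> real^'n) \<Rightarrow> (nat \<Rightarrow> real) \<Rightarrow> nat \<Rightarrow> real^'n \<Rightarrow> nat \<Rightarrow> (real^'n) set" where
  "Aperp v lam m u l = span (v ` (\<Union>l'\<in>{1..l}. lev_I v lam m u l'))"

definition kappa :: "(nat \<Rightarrow> real^'n) \<Rightarrow> (nat \<Rightarrow> real) \<Rightarrow> nat \<Rightarrow> real^'n \<Rightarrow> nat" where
  "kappa v lam m u = (LEAST l. Aperp v lam m u l = UNIV)"

text \<open>Admissible basis: the family e*_{r,s} is indexed by k < n, with lev k = r recording the
  level r of e k.\<close>

definition admissible_basis ::
  "(nat \<Rightarrow> real^'n) \<Rightarrow> (nat \<Rightarrow> real) \<Rightarrow> nat \<Rightarrow> real^'n \<Rightarrow>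
   (nat \<Rightarrow> real^'n) \<Rightarrow> (nat \<Rightarrow> nat) \<Rightarrow> (nat \<Rightarrow> nat \<Rightarrow> int) \<Rightarrow> bool" where
  "admissible_basis v lam m u e lev a \<longleftrightarrow>
     (let n = CARD('n); \<kappa> = kappa v lam m u in
      (\<forall>k<n. rational_pt (e k) \<and> 1 \<le> lev k \<and> lev k \<le> \<kappa>) \<and>
      (\<forall>l\<in>{1..\<kappa>}.
         let K = {k. k < n \<and> lev k \<le> l} in
         (\<forall>k\<in>K. e k \<in> Aperp v lam m u l) \<and>
         (\<forall>q. (\<forall>k\<in>K. q k \<in> \<rat>) \<and> (\<Sum>k\<in>K. q k *\<^sub>R e k) = 0 \<longrightarrow> (\<forall>k\<in>K. q k = 0)) \<and>
         (\<forall>w\<in>Aperp v lam m u l. rational_pt w \<longrightarrow>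
             (\<exists>q. (\<forall>k\<in>K. q k \<in> \<rat>) \<and> w = (\<Sum>k\<in>K. q k *\<^sub>R e k)))) \<and>
      (\<forall>j<m. v j = (\<Sum>k<n. of_int (a j k) *\<^sub>R e k)))"

definition ymono :: "(nat \<Rightarrow> nat \<Rightarrow> int) \<Rightarrow> nat \<Rightarrow> nat \<Rightarrow> (nat \<Rightarrow> complex) \<Rightarrow> complex" where
  "ymono a n j y = (\<Prod>k<n. y k powi a j k)"

definition Fc ::
  "(nat \<Rightarrow> real^'n) \<Rightarrow> (nat \<Rightarrow> real) \<Rightarrow> nat \<Rightarrow> real^'n \<Rightarrow> (nat \<Rightarrow> nat \<Rightarrow> int) \<Rightarrow>
   (nat \<Rightarrow> complex) \<Rightarrow> nat \<Rightarrow> (nat \<Rightarrow> complex) \<Rightarrow> complex" where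
  "Fc v lam m u a c l y = (\<Sum>j\<in>lev_I v lam m u l. c j * ymono a CARD('n) j y)"

definition strongly_bulk_balanced :: "(nat \<Rightarrow> real^'n) \<Rightarrow> (nat \<Rightarrow> real) \<Rightarrow> nat \<Rightarrow> real^'n \<Rightarrow> bool" where
  "strongly_bulk_balanced v lam m u \<longleftrightarrow>
     (\<exists>e lev a c y.
        admissible_basis v lam m u e lev a \<and>
        (\<forall>j<m. c j \<noteq> 0) \<and> (\<forall>k<CARD('n). y k \<noteq> 0) \<and>
        (\<forall>l\<in>{1..kappa v lam m u}. \<forall>k<CARD('n). lev k = l \<longrightarrow>
            y k * deriv (\<lambda>t. Fc v lam m u a c l (y(k := t))) (y k) = 0))"

end

theory Submission
  imports Defs
begin


lemma det_Ints:
  fixes A :: "real^'n^'n"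
  assumes "\<And>i j. A$i$j \<in> \<int>"
  shows "det A \<in> \<int>"
  unfolding det_def by (intro Ints_sum Ints_mult Ints_prod Ints_of_int) (auto simp: assms)

lemma det_Rats:
  fixes A :: "real^'n^'n"
  assumes "\<And>i j. A$i$j \<in> \<rat>"
  shows "det A \<in> \<rat>"
  unfolding det_def by (intro Rats_sum Rats_mult Rats_prod Rats_of_int) (auto simp: assms)

lemma card_basis_cart: "independent (B::(real^'n) set) \<Longrightarrow> span B = UNIV \<Longrightarrow> finite B \<and> card B = CARD('n)"
  by (metis basis_card_eq_dim dim_UNIV independent_bound DIM_cart DIM_real mult.right_neutral subset_UNIV)



definition rowrep :: "(real^'n^'n) \<Rightarrow> 'n \<Rightarrow> real^'n \<Rightarrow> real^'n^'n" where
  "rowrep A i w = (\<chi> i'. if i' = i then w else A$i')"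

lemma rowrep_linear: fixes A :: "real^'n^'n" shows "linear (\<lambda>w. det (rowrep A i w))"
proof (rule linearI)
  fix x y :: "real^'n"
  show "det (rowrep A i (x + y)) = det (rowrep A i x) + det (rowrep A i y)"
    unfolding rowrep_def using det_row_add[of i "\<lambda>_. x" "\<lambda>_. y" "\<lambda>i'. A$i'"] by simp
next
  fix c :: real and x :: "real^'n"
    have e: "c *s x = c *\<^sub>R x" by (simp add: vec_eq_iff)
    have "det (rowrep A i (c *\<^sub>R x)) = det ((\<chi> i'. if i' = i then c *s x else A$i') :: real^'n^'n)"
      unfolding rowrep_def e ..
    also have "\<dots> = c * det ((\<chi> i'. if i' = i then x else A$i') :: real^'n^'n)"
      by (rule det_row_mul)
    finally show "det (rowrep A i (c *\<^sub>R x)) = c *\<^sub>R det (rowrep A i x)"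
      by (simp add: rowrep_def)
qed

lemma coord_system:
  fixes B :: "(real^'n) set"
  assumes indep: "independent B" and sp: "span B = UNIV" and lat: "\<forall>b\<in>B. lattice_pt b"
  obtains G D coord where
    "bij_betw G {..<CARD('n)} B"
    "D \<noteq> 0" "D \<in> \<int>"
    "\<And>k. linear (coord k)"
    "\<And>k w. lattice_pt w \<Longrightarrow> coord k w \<in> \<int>"
    "\<And>k w. rational_pt w \<Longrightarrow> coord k w \<in> \<rat>"
    "\<And>k k'. k < CARD('n) \<Longrightarrow> k' < CARD('n) \<Longrightarrow> coord k (G k') = (if k = k' then D else 0)"
    "\<And>w. w = (\<Sum>k<CARD('n). (coord k w / D) *\<^sub>R G k)"
proof -
  let ?n = "CARD('n)"
  from card_basis_cart[OF indep sp] have finB: "finite B" and cB: "card B = ?n" by auto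
  obtain G where G: "bij_betw G {0..<?n} B" using ex_bij_betw_nat_finite[OF finB] cB by auto
  then have G': "bij_betw G {..<?n} B" by (simp add: atLeast0LessThan)
  obtain ix :: "'n \<Rightarrow> nat" where ix: "bij_betw ix UNIV {0..<?n}"
    using ex_bij_betw_finite_nat[of "UNIV::'n set"] by auto
  then have ix': "bij_betw ix UNIV {..<?n}" by (simp add: atLeast0LessThan)
  define g where "g = inv_into UNIV ix"
  have gix: "g (ix i) = i" for i using ix' unfolding g_def by (simp add: bij_betw_def)
  have ixg: "k < ?n \<Longrightarrow> ix (g k) = k" for k using ix' unfolding g_def
    by (simp add: bij_betw_def f_inv_into_f)
  define A :: "real^'n^'n" where "A = (\<chi> i. G (ix i))"
  define coord where "coord k w = det (rowrep A (g k) w)" for k w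
  have phi: "bij_betw (G \<circ> ix) UNIV B" using bij_betw_trans[OF ix' G'] .
  have Arow: "A $ i = G (ix i)" for i by (simp add: A_def)
  have latA: "A $ i $ j \<in> \<int>" for i j
  proof -
    have "ix i < ?n" using ix' by (auto simp: bij_betw_def)
    then have "G (ix i) \<in> B" using G' by (auto simp: bij_betw_def)
    then show ?thesis using lat by (auto simp: Arow lattice_pt_def)
  qed
  have D0: "det A \<noteq> 0"
  proof -
    have "\<forall>c. sum (\<lambda>i. c i *s row i A) UNIV = 0 \<longrightarrow> (\<forall>i. c i = 0)"
    proof (rule allI, rule impI)
      fix c :: "'n \<Rightarrow> real" assume c0: "sum (\<lambda>i. c i *s row i A) UNIV = 0"
      define h where "h = inv_into UNIV (G \<circ> ix)"
      have hphi0: "h ((G \<circ> ix) i) = i" for i using phi unfolding h_def by (metis bij_betw_def inv_into_f_f UNIV_I)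
      have hphi: "h (G (ix i)) = i" for i using hphi0[of i] by simp
      have inB: "G (ix i) \<in> B" for i using phi by (auto simp: bij_betw_def)
      have "sum (\<lambda>i. c i *s row i A) UNIV = (\<Sum>b\<in>B. c (h b) *\<^sub>R b)"
        using sum.reindex_bij_betw[OF phi, of "\<lambda>b. c (h b) *\<^sub>R b"]
        by (simp add: row_def Arow hphi scalar_mult_eq_scaleR vec_lambda_eta)
      then have "(\<Sum>b\<in>B. c (h b) *\<^sub>R b) = 0" using c0 by simp
      moreover have hy: "\<forall>c. (\<Sum>b\<in>B. c b *\<^sub>R b) = 0 \<longrightarrow> (\<forall>b\<in>B. c b = 0)"
        using indep by (simp add: independent_explicit)
      ultimately have "\<forall>b\<in>B. c (h b) = 0" using hy[rule_format, of "\<lambda>b. c (h b)"] by blast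
      then show "\<forall>i. c i = 0" using hphi inB by metis
    qed
    then show ?thesis
      using matrix_right_invertible_independent_rows invertible_det_nz invertible_right_inverse by blast
  qed
  show ?thesis
  proof
    show "bij_betw G {..<?n} B" by fact
    show "det A \<noteq> 0" by fact
    show "det A \<in> \<int>" using latA by (rule det_Ints)
    show "linear (coord k)" for k unfolding coord_def[abs_def] by (rule rowrep_linear)
    show "coord k w \<in> \<int>" if "lattice_pt w" for k w
      unfolding coord_def using that latA
      by (intro det_Ints) (auto simp: rowrep_def lattice_pt_def)
    show "coord k w \<in> \<rat>" if "rational_pt w" for k w
      unfolding coord_def using that latA
      by (intro det_Rats) (auto simp: rowrep_def rational_pt_def Ints_subset_Rats[THEN subsetD])
    show cG: "coord k (G k') = (if k = k' then det A else 0)" if "k < ?n" "k' < ?n" for k k'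
    proof (cases "k = k'")
      case True
      have "rowrep A (g k) (G k') = A" using True that
        by (simp add: rowrep_def vec_eq_iff Arow ixg)
      then show ?thesis using True by (simp add: coord_def)
    next
      case False
      have "g k \<noteq> g k'" using False that ixg by metis
      moreover have "row (g k) (rowrep A (g k) (G k')) = row (g k') (rowrep A (g k) (G k'))"
        using \<open>g k \<noteq> g k'\<close> that by (simp add: rowrep_def row_def Arow ixg vec_lambda_eta)
      ultimately have "coord k (G k') = 0" unfolding coord_def by (rule det_identical_rows)
      then show ?thesis using False by simp
    qed
    show "w = (\<Sum>k<?n. (coord k w / det A) *\<^sub>R G k)" for w
    proof -
      have l1: "linear (\<lambda>w::real^'n. w)" by (rule linear_id[unfolded id_def])
      have l2: "linear (\<lambda>w. \<Sum>k<?n. (coord k w / det A) *\<^sub>R G k)"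
      proof (rule linearI)
        have lc: "linear (coord k)" for k unfolding coord_def[abs_def] by (rule rowrep_linear)
        fix x y :: "real^'n" and r :: real
        show "(\<Sum>k<?n. (coord k (x + y) / det A) *\<^sub>R G k) =
              (\<Sum>k<?n. (coord k x / det A) *\<^sub>R G k) + (\<Sum>k<?n. (coord k y / det A) *\<^sub>R G k)"
          by (simp add: linear_add[OF lc] add_divide_distrib scaleR_add_left sum.distrib)
        show "(\<Sum>k<?n. (coord k (r *\<^sub>R x) / det A) *\<^sub>R G k) =
              r *\<^sub>R (\<Sum>k<?n. (coord k x / det A) *\<^sub>R G k)"
          by (simp add: linear_scale[OF lc] scaleR_sum_right)
      qed
      have "\<forall>b\<in>B. b = (\<Sum>k<?n. (coord k b / det A) *\<^sub>R G k)"
      proof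
        fix b assume "b \<in> B"
        then obtain k' where k': "k' < ?n" "b = G k'" using G' by (auto simp: bij_betw_def)
        have "(\<Sum>k<?n. (coord k b / det A) *\<^sub>R G k) = (\<Sum>k<?n. (if k = k' then G k else 0))"
          using k' D0 by (intro sum.cong) (auto simp: cG)
        also have "\<dots> = G k'" using k' by simp
        finally show "b = (\<Sum>k<?n. (coord k b / det A) *\<^sub>R G k)" using k' by simp
      qed
      then show ?thesis using linear_eq_on[OF l1 l2, of w B] sp by auto
    qed
  qed
qed



lemma inner_span_zero:
  fixes mm :: "real^'n"
  assumes "\<forall>x\<in>S. mm \<bullet> x = 0" "w \<in> span S"
  shows "mm \<bullet> w = 0"
proof -
  have "linear (\<lambda>x. mm \<bullet> x)" by (rule bounded_linear.linear[OF bounded_linear_inner_right])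
  from linear_eq_0_on_span[OF this, of S w] assms show ?thesis by auto
qed

lemma linear_zero_span:
  fixes f :: "real^'n \<Rightarrow> real"
  assumes "linear f" "\<forall>x\<in>S. f x = 0" "w \<in> span S"
  shows "f w = 0"
  using linear_eq_0_on_span[OF assms(1), of S w] assms by auto

lemma exists_primitive:
  fixes x :: "real^'n"
  assumes lat: "lattice_pt x" and nz: "x \<noteq> 0"
  shows "\<exists>d::int. d \<ge> 1 \<and> primitive_pt ((1 / of_int d) *\<^sub>R x)"
proof -
  obtain i where xi: "x $ i \<noteq> 0" using nz by (metis vec_eq_iff zero_index)
  define S where "S = {d::int. d \<ge> 1 \<and> lattice_pt ((1 / of_int d) *\<^sub>R x)}"
  have bnd: "d \<le> \<lfloor>\<bar>x $ i\<bar>\<rfloor>" if "d \<in> S" for d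
  proof -
    have d1: "d \<ge> 1" and l: "(1 / of_int d) * x $ i \<in> \<int>" using that
      by (auto simp: S_def lattice_pt_def)
    then obtain z where z: "(1 / of_int d) * x $ i = of_int z" by (auto elim: Ints_cases)
    have "z \<noteq> 0" using z xi d1 by auto
    then have "\<bar>of_int z\<bar> \<ge> (1::real)" by linarith
    then have "\<bar>x $ i\<bar> \<ge> of_int d" using z d1
      by (auto simp: abs_mult field_simps)
    then show ?thesis by linarith
  qed
  have finS: "finite S" using bnd
    by (intro finite_subset[of S "{1..\<lfloor>\<bar>x $ i\<bar>\<rfloor>}"]) (auto simp: S_def)
  have "1 \<in> S" using lat by (simp add: S_def)
  then have neS: "S \<noteq> {}" by auto
  define d where "d = Max S"
  have dS: "d \<in> S" using finS neS by (simp add: d_def)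
  have dmax: "d' \<le> d" if "d' \<in> S" for d' using finS that by (simp add: d_def)
  have d1: "d \<ge> 1" using dS by (simp add: S_def)
  show ?thesis
  proof (intro exI conjI)
    show "d \<ge> 1" by fact
    show "primitive_pt ((1 / of_int d) *\<^sub>R x)"
      unfolding primitive_pt_def
    proof (intro conjI allI impI)
      show "lattice_pt ((1 / of_int d) *\<^sub>R x)" using dS by (simp add: S_def)
      show "(1 / of_int d) *\<^sub>R x \<noteq> 0" using nz d1 by simp
      fix d' :: int assume a: "d' \<ge> 1 \<and> lattice_pt ((1 / of_int d') *\<^sub>R (1 / of_int d) *\<^sub>R x)"
      have "(1 / of_int d') *\<^sub>R (1 / of_int d) *\<^sub>R x = (1 / of_int (d * d')) *\<^sub>R x"
        by simp
      have "1 * 1 \<le> d * d'" using a d1 by (intro mult_mono) auto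
      then have "d * d' \<in> S" using a d1 by (auto simp: S_def mult.commute)
      then have "d * d' \<le> d" by (rule dmax)
      then show "d' = 1" using a d1
        by (metis mult.right_neutral mult_left_le_imp_le order_antisym_conv zero_less_one_class.zero_less_one order.strict_trans2)
    qed
  qed
qed

lemma normals_span:
  fixes v :: "nat \<Rightarrow> real^'n"
  assumes bd: "bounded (polytope v lam m)" and ne: "p0 \<in> polytope v lam m"
  shows "span (v ` {..<m}) = UNIV"
proof (rule ccontr)
  assume "span (v ` {..<m}) \<noteq> UNIV"
  then obtain x :: "real^'n" where x: "x \<noteq> 0" "\<forall>y\<in>span (v ` {..<m}). x \<bullet> y = 0"
    using span_not_UNIV_orthogonal by blast
  have xv: "x \<bullet> v j = 0" if "j < m" for j using x(2) that by (auto intro: span_base)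
  have inP: "p0 + t *\<^sub>R x \<in> polytope v lam m" for t
  proof -
    have "(p0 + t *\<^sub>R x) \<bullet> v j = p0 \<bullet> v j" if "j < m" for j
      using xv[OF that] by (simp add: inner_add_left)
    then show ?thesis using ne by (simp add: polytope_def ell_def)
  qed
  obtain M where M: "\<forall>p\<in>polytope v lam m. norm p \<le> M" using bd by (auto simp: bounded_iff)
  define t where "t = (M + norm p0 + 1) / norm x"
  have nx: "norm x > 0" using x by simp
  have "norm (t *\<^sub>R x) = M + norm p0 + 1"
  proof -
    have "norm p0 \<le> M" using M ne by blast
    then have "\<bar>M + norm p0 + 1\<bar> = M + norm p0 + 1" using norm_ge_zero[of p0] by linarith
    then show ?thesis using nx by (simp add: t_def)
  qed
  moreover have "norm (t *\<^sub>R x) \<le> norm (p0 + t *\<^sub>R x) + norm p0"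
    by (metis add_diff_cancel_left' norm_triangle_ineq4 add.commute)
  moreover have "norm (p0 + t *\<^sub>R x) \<le> M" using M inP by blast
  ultimately show False by linarith
qed



lemma NC:
  fixes v :: "nat \<Rightarrow> real^'n"
  assumes lat: "\<forall>j<m. lattice_pt (v j)" and sp: "span (v ` {..<m}) = UNIV"
    and j0: "j0 < m" and S: "S \<subseteq> {..<m}" and nin: "v j0 \<notin> span (v ` S)"
  shows "\<exists>mm. primitive_pt mm \<and>
           (\<exists>J\<subseteq>{..<m}. dim (span (v ` J)) = CARD('n) - 1 \<and> (\<forall>w\<in>span (v ` J). mm \<bullet> w = 0)) \<and>
           (\<forall>i\<in>S. mm \<bullet> v i = 0) \<and> mm \<bullet> v j0 \<noteq> 0"
proof -
  obtain T0 where T0: "T0 \<subseteq> v ` S" "independent T0" "v ` S \<subseteq> span T0"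
    using maximal_independent_subset[of "v ` S"] by blast
  have nT0: "v j0 \<notin> span T0" using nin T0(1) span_mono by blast
  have T1: "independent (insert (v j0) T0)" using independent_insertI[OF nT0 T0(2)] .
  have T1s: "insert (v j0) T0 \<subseteq> v ` {..<m}" using T0(1) S j0 by auto
  obtain B where B: "insert (v j0) T0 \<subseteq> B" "B \<subseteq> v ` {..<m}" "independent B" "v ` {..<m} \<subseteq> span B"
    using maximal_independent_subset_extend[OF T1s T1] by blast
  have spB: "span B = UNIV"
    using B(4) sp by (metis span_mono span_span top.extremum_uniqueI)
  have latB: "\<forall>b\<in>B. lattice_pt b" using B(2) lat by auto
  obtain G D coord where
    G: "bij_betw G {..<CARD('n)} B" and D: "D \<noteq> 0" "D \<in> \<int>"
    and lc: "\<And>k. linear (coord k)"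
    and ci: "\<And>k w. lattice_pt w \<Longrightarrow> coord k w \<in> \<int>"
    and cq: "\<And>k w. rational_pt w \<Longrightarrow> coord k w \<in> \<rat>"
    and cG: "\<And>k k'. k < CARD('n) \<Longrightarrow> k' < CARD('n) \<Longrightarrow> coord k (G k') = (if k = k' then D else 0)"
    and rep: "\<And>w. w = (\<Sum>k<CARD('n). (coord k w / D) *\<^sub>R G k)"
    using coord_system[OF B(3) spB latB] by blast
  have "v j0 \<in> B" using B(1) by auto
  then have "v j0 \<in> G ` {..<CARD('n)}" using G by (simp add: bij_betw_def)
  then obtain k0 where k0: "k0 < CARD('n)" "G k0 = v j0" by auto
  define x :: "real^'n" where "x = (\<chi> t. coord k0 (axis t 1))"
  have xw: "x \<bullet> w = coord k0 w" for w
  proof -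
    have "coord k0 w = coord k0 (\<Sum>t\<in>UNIV. w $ t *\<^sub>R axis t 1)"
      using basis_expansion[of w] by (simp add: scalar_mult_eq_scaleR)
    also have "\<dots> = (\<Sum>t\<in>UNIV. w $ t * coord k0 (axis t 1))"
      by (simp add: linear_sum[OF lc] linear_scale[OF lc])
    also have "\<dots> = x \<bullet> w" by (simp add: x_def inner_vec_def mult.commute)
    finally show ?thesis by simp
  qed
  have xlat: "lattice_pt x"
    unfolding lattice_pt_def x_def
    by (auto intro!: ci simp: lattice_pt_def axis_def)
  have xj0: "x \<bullet> v j0 = D" using xw cG[OF k0(1) k0(1)] k0 by simp
  then have xnz: "x \<noteq> 0" using D by auto
  define B' where "B' = B - {v j0}"
  define J where "J = {j. j < m \<and> v j \<in> B'}"
  have vJ: "v ` J = B'" using B(2) by (auto simp: J_def B'_def)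
  have xB': "\<forall>b\<in>B'. x \<bullet> b = 0"
  proof
    fix b assume b: "b \<in> B'"
    then have "b \<in> G ` {..<CARD('n)}" using G by (simp add: bij_betw_def B'_def)
    then obtain k' where k': "k' < CARD('n)" "G k' = b" by auto
    have "k' \<noteq> k0" using k' k0 b by (auto simp: B'_def)
    then show "x \<bullet> b = 0" using xw cG[OF k0(1) k'(1)] k' by simp
  qed
  have T0B': "T0 \<subseteq> B'" using B(1) nT0 span_base unfolding B'_def by blast
  have cardB: "card B = CARD('n)" "finite B" using card_basis_cart[OF B(3) spB] by auto
  have indB': "independent B'" using B(3) by (simp add: B'_def independent_mono)
  have dimB': "dim (span B') = CARD('n) - 1"
    using dim_eq_card_independent[OF indB'] cardB \<open>v j0 \<in> B\<close> by (simp add: B'_def)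
  obtain d :: int where d: "d \<ge> 1" "primitive_pt ((1 / of_int d) *\<^sub>R x)"
    using exists_primitive[OF xlat xnz] by blast
  define mm where "mm = (1 / of_int d) *\<^sub>R x"
  have mmw: "mm \<bullet> w = (1 / of_int d) * (x \<bullet> w)" for w by (simp add: mm_def)
  show ?thesis
  proof (intro exI conjI)
    show "primitive_pt mm" using d by (simp add: mm_def)
    show "J \<subseteq> {..<m}" by (auto simp: J_def)
    show "dim (span (v ` J)) = CARD('n) - 1" using dimB' vJ by simp
    show "\<forall>w\<in>span (v ` J). mm \<bullet> w = 0"
      using inner_span_zero[OF xB'] vJ mmw by simp
    show "\<forall>i\<in>S. mm \<bullet> v i = 0"
    proof
      fix i assume "i \<in> S"
      then have "v i \<in> span B'" using T0(3) T0B' span_mono by blast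
      then show "mm \<bullet> v i = 0" using inner_span_zero[OF xB'] mmw by simp
    qed
    show "mm \<bullet> v j0 \<noteq> 0" using mmw xj0 D d by simp
  qed
qed



lemma notC_trop:
  fixes v :: "nat \<Rightarrow> real^'n"
  assumes mm0: "mm \<noteq> 0" and j0: "j0 < m"
    and orth1: "\<And>i. i < m \<Longrightarrow> ell v lam i u < ell v lam j0 u \<Longrightarrow> mm \<bullet> v i = 0"
    and orth2: "\<And>i. i < m \<Longrightarrow> ell v lam i u = ell v lam j0 u \<Longrightarrow> i \<noteq> j0 \<Longrightarrow> mm \<bullet> v i = 0"
    and nz: "mm \<bullet> v j0 \<noteq> 0"
  shows "u \<notin> trop v lam m mm"
proof
  assume "u \<in> trop v lam m mm"
  then obtain j1 j2 where j: "j1 < m" "j2 < m" "j1 \<noteq> j2" "mm \<bullet> v j1 \<noteq> 0" "mm \<bullet> v j2 \<noteq> 0"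
    "ell v lam j1 u = ell v lam j2 u" "\<forall>j<m. mm \<bullet> v j \<noteq> 0 \<longrightarrow> ell v lam j1 u \<le> ell v lam j u"
    using mm0 unfolding trop_def by auto
  have le: "ell v lam j1 u \<le> ell v lam j0 u" using j(7) j0 nz by blast
  have "\<not> ell v lam j1 u < ell v lam j0 u" using orth1[OF j(1)] j(4) by blast
  then have e1: "ell v lam j1 u = ell v lam j0 u" using le by linarith
  have "j1 = j0" using orth2[OF j(1) e1] j(4) by blast
  moreover have "j2 = j0" using orth2[OF j(2)] e1 j(6) j(5) by argo
  ultimately show False using j(3) by simp
qed

lemma C_trop:
  fixes v :: "nat \<Rightarrow> real^'n"
  assumes C: "\<forall>j<m. v j \<in> span (v ` ({i. i < m \<and> ell v lam i u < ell v lam j u} \<union> ({i. i < m \<and> ell v lam i u = ell v lam j u} - {j})))"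
    and sp: "span (v ` {..<m}) = UNIV"
  shows "u \<in> trop v lam m mm"
proof (cases "mm = 0")
  case True then show ?thesis by (simp add: trop_def)
next
  case False
  define Z where "Z = {j. j < m \<and> mm \<bullet> v j \<noteq> 0}"
  have "Z \<noteq> {}"
  proof
    assume "Z = {}"
    then have "\<forall>x\<in>v ` {..<m}. mm \<bullet> x = 0" by (auto simp: Z_def)
    then have "mm \<bullet> mm = 0" using inner_span_zero[of "v ` {..<m}" mm mm] sp by simp
    then show False using False by simp
  qed
  have finZ: "finite Z" by (auto simp: Z_def)
  define L where "L = (\<lambda>j. ell v lam j u)"
  have "Min (L ` Z) \<in> L ` Z" using finZ \<open>Z \<noteq> {}\<close> by (intro Min_in) auto
  then obtain j0 where j0Z: "j0 \<in> Z" and j0e: "L j0 = Min (L ` Z)" by auto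
  have j0min: "\<forall>j\<in>Z. L j0 \<le> L j" using finZ j0e by simp
  let ?S = "{i. i < m \<and> ell v lam i u < ell v lam j0 u} \<union> ({i. i < m \<and> ell v lam i u = ell v lam j0 u} - {j0})"
  have "\<exists>i\<in>?S. mm \<bullet> v i \<noteq> 0"
  proof (rule ccontr)
    assume "\<not> ?thesis"
    then have "\<forall>x\<in>v ` ?S. mm \<bullet> x = 0" by blast
    moreover have "v j0 \<in> span (v ` ?S)" using C j0Z by (simp add: Z_def)
    ultimately have "mm \<bullet> v j0 = 0" by (rule inner_span_zero)
    then show False using j0Z by (simp add: Z_def)
  qed
  then obtain i where i: "i \<in> ?S" "mm \<bullet> v i \<noteq> 0" by blast
  have im: "i < m" using i(1) by blast
  then have iZ: "i \<in> Z" using i(2) by (simp add: Z_def)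
  then have "\<not> ell v lam i u < ell v lam j0 u" using j0min unfolding L_def by force
  then have ie: "ell v lam i u = ell v lam j0 u" "i \<noteq> j0" using i(1) by blast+
  have j0m: "j0 < m" "mm \<bullet> v j0 \<noteq> 0" using j0Z by (auto simp: Z_def)
  have "\<forall>j<m. mm \<bullet> v j \<noteq> 0 \<longrightarrow> ell v lam j0 u \<le> ell v lam j u"
    using j0min unfolding L_def Z_def by blast
  then show ?thesis
    unfolding trop_def using False j0m im ie i(2) by (simp; metis)
qed



definition Low :: "(nat \<Rightarrow> real^'n) \<Rightarrow> (nat \<Rightarrow> real) \<Rightarrow> nat \<Rightarrow> real^'n \<Rightarrow> nat \<Rightarrow> nat set" where
  "Low v lam m u l = (\<Union>l'\<in>{1..l}. lev_I v lam m u l')"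

context
  fixes v :: "nat \<Rightarrow> real^'n" and lam :: "nat \<Rightarrow> real" and m :: nat and u :: "real^'n"
begin

lemma vals_set: "set (lev_vals v lam m u) = (\<lambda>j. ell v lam j u) ` {..<m}"
  by (simp add: lev_vals_def)

lemma vals_strict: "sorted_wrt (<) (lev_vals v lam m u)"
  by (simp add: lev_vals_def strict_sorted_list_of_set)

lemma vals_lt:
  assumes "a < length (lev_vals v lam m u)" "b < length (lev_vals v lam m u)"
  shows "lev_vals v lam m u ! a < lev_vals v lam m u ! b \<longleftrightarrow> a < b"
proof
  assume "a < b" then show "lev_vals v lam m u ! a < lev_vals v lam m u ! b"
    using sorted_wrt_nth_less[OF vals_strict] assms by blast
next
  assume h: "lev_vals v lam m u ! a < lev_vals v lam m u ! b"
  show "a < b"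
  proof (rule ccontr)
    assume "\<not> a < b"
    then have "b = a \<or> b < a" by auto
    then show False using h sorted_wrt_nth_less[OF vals_strict, of b a] assms by auto
  qed
qed

lemma vals_eq:
  assumes "a < length (lev_vals v lam m u)" "b < length (lev_vals v lam m u)"
  shows "lev_vals v lam m u ! a = lev_vals v lam m u ! b \<longleftrightarrow> a = b"
proof
  assume h: "lev_vals v lam m u ! a = lev_vals v lam m u ! b"
  have "\<not> a < b" using vals_lt[OF assms] h by simp
  moreover have "\<not> b < a" using vals_lt[OF assms(2,1)] h by simp
  ultimately show "a = b" by simp
qed simp

lemma lev_I_iff: "j \<in> lev_I v lam m u l \<longleftrightarrow> j < m \<and> ell v lam j u = lev_vals v lam m u ! (l - 1)"
  by (simp add: lev_I_def)

lemma lev_I_sub: "lev_I v lam m u l \<subseteq> {..<m}"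
  by (auto simp: lev_I_def)

lemma lev_ex:
  assumes "j < m"
  shows "\<exists>l. 1 \<le> l \<and> l \<le> length (lev_vals v lam m u) \<and> j \<in> lev_I v lam m u l"
proof -
  have "ell v lam j u \<in> set (lev_vals v lam m u)" using assms vals_set by auto
  then obtain p where p: "p < length (lev_vals v lam m u)" "lev_vals v lam m u ! p = ell v lam j u"
    by (auto simp: in_set_conv_nth)
  show ?thesis
    by (rule exI[of _ "Suc p"]) (use p assms in \<open>auto simp: lev_I_iff\<close>)
qed

lemma lev_I_same:
  assumes "j \<in> lev_I v lam m u l"
  shows "{i. i < m \<and> ell v lam i u = ell v lam j u} = lev_I v lam m u l"
  using assms by (auto simp: lev_I_iff)

lemma lev_I_disj:
  assumes "1 \<le> l1" "l1 \<le> length (lev_vals v lam m u)" "1 \<le> l2" "l2 \<le> length (lev_vals v lam m u)" "l1 \<noteq> l2"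
  shows "lev_I v lam m u l1 \<inter> lev_I v lam m u l2 = {}"
proof -
  have "lev_vals v lam m u ! (l1 - 1) \<noteq> lev_vals v lam m u ! (l2 - 1)"
    using vals_eq[of "l1 - 1" "l2 - 1"] assms by auto
  then show ?thesis by (auto simp: lev_I_iff)
qed

lemma lev_below:
  assumes l: "1 \<le> l" "l \<le> length (lev_vals v lam m u)" and j: "j \<in> lev_I v lam m u l"
  shows "{i. i < m \<and> ell v lam i u < ell v lam j u} = Low v lam m u (l - 1)"
proof
  show "{i. i < m \<and> ell v lam i u < ell v lam j u} \<subseteq> Low v lam m u (l - 1)"
  proof
    fix i assume i: "i \<in> {i. i < m \<and> ell v lam i u < ell v lam j u}"
    then obtain l' where l': "1 \<le> l'" "l' \<le> length (lev_vals v lam m u)" "i \<in> lev_I v lam m u l'"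
      using lev_ex by blast
    have "lev_vals v lam m u ! (l' - 1) < lev_vals v lam m u ! (l - 1)"
      using i l' j by (auto simp: lev_I_iff)
    then have "l' - 1 < l - 1" using vals_lt[of "l' - 1" "l - 1"] l l' by auto
    then show "i \<in> Low v lam m u (l - 1)" using l' by (auto simp: Low_def)
  qed
next
  show "Low v lam m u (l - 1) \<subseteq> {i. i < m \<and> ell v lam i u < ell v lam j u}"
  proof
    fix i assume "i \<in> Low v lam m u (l - 1)"
    then obtain l' where l': "1 \<le> l'" "l' \<le> l - 1" "i \<in> lev_I v lam m u l'" by (auto simp: Low_def)
    have "lev_vals v lam m u ! (l' - 1) < lev_vals v lam m u ! (l - 1)"
      using vals_lt[of "l' - 1" "l - 1"] l l' by auto
    then show "i \<in> {i. i < m \<and> ell v lam i u < ell v lam j u}" using l' j by (auto simp: lev_I_iff)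
  qed
qed

lemma Low_mono: "a \<le> b \<Longrightarrow> Low v lam m u a \<subseteq> Low v lam m u b"
  unfolding Low_def by (rule UN_mono) auto

lemma Low_sub: "Low v lam m u l \<subseteq> {..<m}"
  using lev_I_sub by (auto simp: Low_def)

lemma Low_N: "Low v lam m u (length (lev_vals v lam m u)) = {..<m}"
proof
  show "Low v lam m u (length (lev_vals v lam m u)) \<subseteq> {..<m}" by (rule Low_sub)
  show "{..<m} \<subseteq> Low v lam m u (length (lev_vals v lam m u))"
  proof
    fix j assume "j \<in> {..<m}"
    then obtain l where "1 \<le> l" "l \<le> length (lev_vals v lam m u)" "j \<in> lev_I v lam m u l"
      using lev_ex by blast
    then show "j \<in> Low v lam m u (length (lev_vals v lam m u))" unfolding Low_def by auto
  qed
qed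

lemma Low_0: "Low v lam m u 0 = {}"
  by (simp add: Low_def)

lemma Aperp_eq: "Aperp v lam m u l = span (v ` Low v lam m u l)"
  by (simp add: Aperp_def Low_def)

lemma kappa_props:
  assumes sp: "span (v ` {..<m}) = UNIV"
  shows "1 \<le> kappa v lam m u" "kappa v lam m u \<le> length (lev_vals v lam m u)"
        "Aperp v lam m u (kappa v lam m u) = UNIV"
proof -
  have AN: "Aperp v lam m u (length (lev_vals v lam m u)) = UNIV"
    using sp by (simp add: Aperp_eq Low_N)
  show "Aperp v lam m u (kappa v lam m u) = UNIV"
    unfolding kappa_def by (rule LeastI[of _ "length (lev_vals v lam m u)"]) (rule AN)
  show "kappa v lam m u \<le> length (lev_vals v lam m u)"
    unfolding kappa_def by (rule Least_le) (rule AN)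
  have "Aperp v lam m u 0 \<noteq> UNIV"
  proof
    assume "Aperp v lam m u 0 = UNIV"
    then have "(UNIV :: (real^'n) set) = {0}" by (simp add: Aperp_eq Low_0)
    moreover have "axis undefined (1::real) \<noteq> (0 :: real^'n)" by (simp add: axis_eq_0_iff)
    ultimately show False by blast
  qed
  then have "kappa v lam m u \<noteq> 0"
    using \<open>Aperp v lam m u (kappa v lam m u) = UNIV\<close> by metis
  then show "1 \<le> kappa v lam m u" by simp
qed

end



lemma ymono_upd:
  assumes k: "k < n"
  shows "ymono a n j (y(k:=t)) = t powi (a j k) * (\<Prod>k'\<in>{..<n}-{k}. y k' powi a j k')"
proof -
  have "ymono a n j (y(k:=t)) = (y(k:=t)) k powi a j k * (\<Prod>k'\<in>{..<n}-{k}. (y(k:=t)) k' powi a j k')"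
    unfolding ymono_def using k by (simp add: prod.remove)
  also have "(\<Prod>k'\<in>{..<n}-{k}. (y(k:=t)) k' powi a j k') = (\<Prod>k'\<in>{..<n}-{k}. y k' powi a j k')"
    by (rule prod.cong) auto
  finally show ?thesis by (simp only: fun_upd_same)
qed

lemma ymono_deriv:
  fixes y :: "nat \<Rightarrow> complex"
  assumes y: "\<forall>k'<n. y k' \<noteq> 0" and k: "k < n"
  shows "((\<lambda>t. ymono a n j (y(k:=t))) has_field_derivative (of_int (a j k) * ymono a n j y / y k)) (at (y k))"
proof -
  define R where "R = (\<Prod>k'\<in>{..<n}-{k}. y k' powi a j k')"
  have eq: "(\<lambda>t. ymono a n j (y(k:=t))) = (\<lambda>t. t powi (a j k) * R)"
    using ymono_upd[OF k] by (simp add: R_def)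
  have yk: "y k \<noteq> 0" using y k by simp
  have d: "((\<lambda>t. t powi (a j k) * R) has_field_derivative (of_int (a j k) * y k powi (a j k - 1) * 1) * R) (at (y k))"
    by (rule DERIV_cmult_right, rule DERIV_power_int[OF DERIV_ident]) (use yk in simp)
  have "ymono a n j y = y k powi (a j k) * R"
    using ymono_upd[OF k, of a j y "y k"] by (simp add: R_def)
  moreover have "y k powi (a j k - 1) = y k powi (a j k) / y k"
    using power_int_diff[of "y k" "a j k" 1] yk by simp
  ultimately have "(of_int (a j k) * y k powi (a j k - 1) * 1) * R = of_int (a j k) * ymono a n j y / y k"
    by simp
  with d eq show ?thesis by simp
qed

lemma Fc_deriv:
  fixes y :: "nat \<Rightarrow> complex"
  assumes y: "\<forall>k'<CARD('n). y k' \<noteq> 0" and k: "k < CARD('n)"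
  shows "y k * deriv (\<lambda>t. Fc (v :: nat \<Rightarrow> real^'n) lam m u a c l (y(k := t))) (y k)
         = (\<Sum>j\<in>lev_I v lam m u l. c j * of_int (a j k) * ymono a CARD('n) j y)"
proof -
  have yk: "y k \<noteq> 0" using y k by simp
  have "((\<lambda>t. Fc v lam m u a c l (y(k := t))) has_field_derivative
          (\<Sum>j\<in>lev_I v lam m u l. c j * (of_int (a j k) * ymono a CARD('n) j y / y k))) (at (y k))"
    unfolding Fc_def
    by (intro DERIV_sum DERIV_cmult ymono_deriv[OF y k])
  then have "deriv (\<lambda>t. Fc v lam m u a c l (y(k := t))) (y k) =
          (\<Sum>j\<in>lev_I v lam m u l. c j * (of_int (a j k) * ymono a CARD('n) j y / y k))"
    by (rule DERIV_imp_deriv)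
  then show ?thesis using yk by (simp add: sum_distrib_left field_simps)
qed

lemma generic_nonzero:
  fixes P :: "(nat \<Rightarrow> real) \<Rightarrow> bool"
  assumes P0: "P (\<lambda>_. 0)" and Padd: "\<And>c d. P c \<Longrightarrow> P d \<Longrightarrow> P (\<lambda>i. c i + d i)"
    and Pscale: "\<And>c s. P c \<Longrightarrow> P (\<lambda>i. s * c i)"
    and fin: "finite J" and ex: "\<forall>j\<in>J. \<exists>c. P c \<and> c j \<noteq> 0"
  shows "\<exists>c. P c \<and> (\<forall>j\<in>J. c j \<noteq> 0)"
  using fin ex
proof (induction J rule: finite_induct)
  case empty then show ?case using P0 by auto
next
  case (insert j J)
  then obtain c where c: "P c" "\<forall>i\<in>J. c i \<noteq> 0" by auto
  obtain r where r: "P r" "r j \<noteq> 0" using insert.prems by auto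
  have "finite ((\<lambda>i. - c i / r i) ` insert j J)" using insert.hyps by simp
  then obtain s where s: "s \<notin> (\<lambda>i. - c i / r i) ` insert j J"
    using ex_new_if_finite[OF infinite_UNIV_char_0] by blast
  define c' where "c' = (\<lambda>i. c i + s * r i)"
  have "P c'" unfolding c'_def using Padd[OF c(1) Pscale[OF r(1)]] by simp
  moreover have "\<forall>i\<in>insert j J. c' i \<noteq> 0"
  proof
    fix i assume i: "i \<in> insert j J"
    show "c' i \<noteq> 0"
    proof (cases "r i = 0")
      case True
      then have "i \<noteq> j" using r by auto
      then have "i \<in> J" using i by auto
      then show ?thesis using True c by (simp add: c'_def)
    next
      case False
      show ?thesis
      proof
        assume "c' i = 0"
        then have "s = - c i / r i" using False by (simp add: c'_def field_simps)
        then show False using s i by auto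
      qed
    qed
  qed
  ultimately show ?case by blast
qed

lemma span_image_sum:
  fixes f :: "nat \<Rightarrow> real^'n"
  assumes "finite A" "x \<in> span (f ` A)"
  shows "\<exists>r. x = (\<Sum>a\<in>A. r a *\<^sub>R f a)"
  using assms
proof (induction A arbitrary: x rule: finite_induct)
  case empty then show ?case by simp
next
  case (insert a A)
  from insert.prems have "x \<in> span (insert (f a) (f ` A))" by simp
  then obtain k where k: "x - k *\<^sub>R f a \<in> span (f ` A)" by (auto simp: span_insert)
  then obtain r where r: "x - k *\<^sub>R f a = (\<Sum>b\<in>A. r b *\<^sub>R f b)" using insert.IH by blast
  define r' where "r' = r(a := k)"
  have "(\<Sum>b\<in>insert a A. r' b *\<^sub>R f b) = k *\<^sub>R f a + (\<Sum>b\<in>A. r b *\<^sub>R f b)"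
    using insert.hyps by (simp add: r'_def) (rule sum.cong, auto)
  then show ?case using r by (metis add.commute diff_add_cancel)
qed

lemma adapted_basis:
  fixes V :: "nat \<Rightarrow> (real^'n) set"
  assumes mono: "\<And>l. V l \<subseteq> V (Suc l)"
  shows "\<exists>B. B \<subseteq> V K \<and> independent B \<and> (\<forall>l\<le>K. V l \<subseteq> span (B \<inter> V l))"
proof (induction K)
  case 0
  obtain B where "B \<subseteq> V 0" "independent B" "V 0 \<subseteq> span B" using maximal_independent_subset by blast
  then show ?case by (intro exI[of _ B]) (auto simp: Int_absorb2)
next
  case (Suc K)
  then obtain B where B: "B \<subseteq> V K" "independent B" "\<forall>l\<le>K. V l \<subseteq> span (B \<inter> V l)" by blast
  have "B \<subseteq> V (Suc K)" using B(1) mono by blast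
  then obtain B' where B': "B \<subseteq> B'" "B' \<subseteq> V (Suc K)" "independent B'" "V (Suc K) \<subseteq> span B'"
    using maximal_independent_subset_extend[OF _ B(2)] by blast
  have "\<forall>l\<le>Suc K. V l \<subseteq> span (B' \<inter> V l)"
  proof (intro allI impI)
    fix l assume l: "l \<le> Suc K"
    show "V l \<subseteq> span (B' \<inter> V l)"
    proof (cases "l = Suc K")
      case True then show ?thesis using B' by (simp add: Int_absorb2)
    next
      case False
      then have "l \<le> K" using l by simp
      then have "V l \<subseteq> span (B \<inter> V l)" using B(3) by blast
      also have "\<dots> \<subseteq> span (B' \<inter> V l)" using B'(1) by (intro span_mono) blast
      finally show ?thesis .
    qed
  qed
  then show ?case using B' by blast
qed



definition condC :: "(nat \<Rightarrow> real^'n) \<Rightarrow> (nat \<Rightarrow> real) \<Rightarrow> nat \<Rightarrow> real^'n \<Rightarrow> bool" where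
  "condC v lam m u \<longleftrightarrow> (\<forall>j<m. v j \<in> span (v ` ({i. i < m \<and> ell v lam i u < ell v lam j u} \<union>
      ({i. i < m \<and> ell v lam i u = ell v lam j u} - {j}))))"

lemma lattice_rational: "lattice_pt x \<Longrightarrow> rational_pt x"
  by (auto simp: lattice_pt_def rational_pt_def Ints_subset_Rats[THEN subsetD])

lemma sbb_C:
  fixes v :: "nat \<Rightarrow> real^'n"
  assumes lat: "\<forall>j<m. lattice_pt (v j)" and sp: "span (v ` {..<m}) = UNIV"
    and sbb: "strongly_bulk_balanced v lam m u"
  shows "condC v lam m u"
proof -
  let ?n = "CARD('n)"
  let ?\<kappa> = "kappa v lam m u"
  let ?N = "length (lev_vals v lam m u)"
  obtain e lev a c y where adm: "admissible_basis v lam m u e lev a"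
    and cnz: "\<forall>j<m. c j \<noteq> 0" and ynz: "\<forall>k<?n. y k \<noteq> 0"
    and eqs: "\<forall>l\<in>{1..?\<kappa>}. \<forall>k<?n. lev k = l \<longrightarrow>
            y k * deriv (\<lambda>t. Fc v lam m u a c l (y(k := t))) (y k) = 0"
    using sbb unfolding strongly_bulk_balanced_def by blast
  have A1: "\<forall>k<?n. rational_pt (e k) \<and> 1 \<le> lev k \<and> lev k \<le> ?\<kappa>"
    using adm unfolding admissible_basis_def Let_def by blast
  have A2: "\<forall>l\<in>{1..?\<kappa>}.
         (\<forall>k\<in>{k. k < ?n \<and> lev k \<le> l}. e k \<in> Aperp v lam m u l) \<and>
         (\<forall>q. (\<forall>k\<in>{k. k < ?n \<and> lev k \<le> l}. q k \<in> \<rat>) \<and> (\<Sum>k\<in>{k. k < ?n \<and> lev k \<le> l}. q k *\<^sub>R e k) = 0 \<longrightarrow> (\<forall>k\<in>{k. k < ?n \<and> lev k \<le> l}. q k = 0)) \<and>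
         (\<forall>w\<in>Aperp v lam m u l. rational_pt w \<longrightarrow>
             (\<exists>q. (\<forall>k\<in>{k. k < ?n \<and> lev k \<le> l}. q k \<in> \<rat>) \<and> w = (\<Sum>k\<in>{k. k < ?n \<and> lev k \<le> l}. q k *\<^sub>R e k)))"
    using adm unfolding admissible_basis_def Let_def by blast
  have A3: "\<forall>j<m. v j = (\<Sum>k<?n. of_int (a j k) *\<^sub>R e k)"
    using adm unfolding admissible_basis_def Let_def by blast
  have k1: "1 \<le> ?\<kappa>" and kN: "?\<kappa> \<le> ?N" and Ak: "Aperp v lam m u ?\<kappa> = UNIV"
    using kappa_props[OF sp] by auto
  show ?thesis
    unfolding condC_def
  proof (intro allI impI, rule ccontr)
    fix j0 assume j0: "j0 < m"
    let ?S = "{i. i < m \<and> ell v lam i u < ell v lam j0 u} \<union> ({i. i < m \<and> ell v lam i u = ell v lam j0 u} - {j0})"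
    assume nin: "v j0 \<notin> span (v ` ?S)"
    obtain l0 where l0: "1 \<le> l0" "l0 \<le> ?N" "j0 \<in> lev_I v lam m u l0" using lev_ex[OF j0] by blast
    have Sbelow: "{i. i < m \<and> ell v lam i u < ell v lam j0 u} = Low v lam m u (l0 - 1)"
      by (rule lev_below[OF l0])
    have Ssame: "{i. i < m \<and> ell v lam i u = ell v lam j0 u} = lev_I v lam m u l0"
      by (rule lev_I_same[OF l0(3)])
    have l0k: "l0 \<le> ?\<kappa>"
    proof (rule ccontr)
      assume "\<not> l0 \<le> ?\<kappa>"
      then have "Low v lam m u ?\<kappa> \<subseteq> Low v lam m u (l0 - 1)" by (intro Low_mono) simp
      then have "span (v ` Low v lam m u ?\<kappa>) \<subseteq> span (v ` ?S)"
        unfolding Sbelow by (intro span_mono) blast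
      then have "span (v ` ?S) = UNIV" using Ak by (auto simp: Aperp_eq)
      then show False using nin by simp
    qed
    have Ssub: "?S \<subseteq> {..<m}" by auto
    obtain mm where mmS: "\<forall>i\<in>?S. mm \<bullet> v i = 0" and mmj0: "mm \<bullet> v j0 \<noteq> 0"
      using NC[OF lat sp j0 Ssub nin] by blast
    have mmspan: "mm \<bullet> w = 0" if "w \<in> span (v ` ?S)" for w
      using inner_span_zero[of "v ` ?S" mm w] mmS that by auto
    have phi_low: "mm \<bullet> e k = 0" if "k < ?n" "lev k < l0" for k
    proof -
      have lk: "lev k \<in> {1..?\<kappa>}" using A1 that by auto
      have "k \<in> {k. k < ?n \<and> lev k \<le> lev k}" using that by simp
      then have "e k \<in> Aperp v lam m u (lev k)" using conjunct1[OF bspec[OF A2 lk]] by blast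
      also have "\<dots> \<subseteq> span (v ` Low v lam m u (l0 - 1))"
        unfolding Aperp_eq using that by (intro span_mono image_mono Low_mono) simp
      also have "\<dots> \<subseteq> span (v ` ?S)" unfolding Sbelow by (intro span_mono) blast
      finally show ?thesis by (rule mmspan)
    qed
    have Kk: "{k. k < ?n \<and> lev k \<le> ?\<kappa>} = {..<?n}" using A1 by auto
    have indk: "\<forall>q. (\<forall>k\<in>{..<?n}. q k \<in> \<rat>) \<and> (\<Sum>k<?n. q k *\<^sub>R e k) = 0 \<longrightarrow> (\<forall>k\<in>{..<?n}. q k = 0)"
    proof -
    have "?\<kappa> \<in> {1..?\<kappa>}" using k1 by simp
    from conjunct1[OF conjunct2[OF bspec[OF A2 this]]] show ?thesis unfolding Kk .
  qed
    have a_high: "a j k = 0" if j: "j \<in> lev_I v lam m u l0" and k: "k < ?n" "l0 < lev k" for j k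
    proof -
      have jm: "j < m" using j lev_I_sub by blast
      have "j \<in> Low v lam m u l0" using j l0 by (auto simp: Low_def)
      then have vA: "v j \<in> Aperp v lam m u l0" unfolding Aperp_eq by (intro span_base) blast
      have rv: "rational_pt (v j)" using lat jm lattice_rational by blast
      have l0in: "l0 \<in> {1..?\<kappa>}" using l0 l0k by simp
      obtain q where q: "\<forall>k\<in>{k. k < ?n \<and> lev k \<le> l0}. q k \<in> \<rat>"
          "v j = (\<Sum>k\<in>{k. k < ?n \<and> lev k \<le> l0}. q k *\<^sub>R e k)"
        using A2 l0in vA rv by blast
      define q' where "q' k = of_int (a j k) - (if lev k \<le> l0 then q k else 0)" for k
      have "(\<Sum>k\<in>{k. k < ?n \<and> lev k \<le> l0}. q k *\<^sub>R e k) = (\<Sum>k<?n. (if lev k \<le> l0 then q k else 0) *\<^sub>R e k)"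
      proof -
        have "{k. k < ?n \<and> lev k \<le> l0} = {k \<in> {..<?n}. lev k \<le> l0}" by auto
        then show ?thesis by (simp add: sum.inter_filter[symmetric] if_distrib[of "\<lambda>x. x *\<^sub>R _"] cong: if_cong)
      qed
      then have "(\<Sum>k<?n. q' k *\<^sub>R e k) = 0"
        using A3 jm q(2) by (simp add: q'_def scaleR_diff_left sum_subtractf)
      moreover have "\<forall>k\<in>{..<?n}. q' k \<in> \<rat>" using q(1) by (auto simp: q'_def)
      ultimately have "q' k = 0" using indk k by blast
      then show ?thesis using k by (simp add: q'_def)
    qed
    define Y where "Y j = ymono a ?n j y" for j
    have Ynz: "Y j0 \<noteq> 0" unfolding Y_def ymono_def
      by (subst prod_zero_iff) (use ynz in auto)
    define Kq where "Kq = {k. k < ?n \<and> lev k = l0}"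
    define I0 where "I0 = lev_I v lam m u l0"
    have finI0: "finite I0" unfolding I0_def by (rule finite_subset[OF lev_I_sub]) simp
    have E: "(\<Sum>j\<in>I0. c j * of_int (a j k) * Y j) = 0" if "k \<in> Kq" for k
    proof -
      have "k < ?n" "lev k = l0" using that by (auto simp: Kq_def)
      moreover have "l0 \<in> {1..?\<kappa>}" using l0 l0k by simp
      ultimately have "y k * deriv (\<lambda>t. Fc v lam m u a c l0 (y(k := t))) (y k) = 0"
        using eqs by blast
      then show ?thesis using Fc_deriv[OF ynz \<open>k < ?n\<close>] by (simp add: I0_def Y_def)
    qed
    have inner: "(\<Sum>k\<in>Kq. of_int (a j k) * (mm \<bullet> e k)) = mm \<bullet> v j" if j: "j \<in> I0" for j
    proof -
      have jm: "j < m" using j lev_I_sub unfolding I0_def by blast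
      have "mm \<bullet> v j = (\<Sum>k<?n. of_int (a j k) * (mm \<bullet> e k))"
        using A3 jm by (simp add: inner_sum_right)
      also have "\<dots> = (\<Sum>k\<in>Kq. of_int (a j k) * (mm \<bullet> e k))"
      proof (rule sum.mono_neutral_right)
        show "finite {..<?n}" by simp
        show "Kq \<subseteq> {..<?n}" by (auto simp: Kq_def)
        show "\<forall>k\<in>{..<?n} - Kq. of_int (a j k) * (mm \<bullet> e k) = 0"
        proof
          fix k assume k: "k \<in> {..<?n} - Kq"
          then have "lev k < l0 \<or> l0 < lev k" by (auto simp: Kq_def)
          then show "of_int (a j k) * (mm \<bullet> e k) = 0"
            using phi_low a_high j k unfolding I0_def by auto
        qed
      qed
      finally show ?thesis by simp
    qed
    have "0 = (\<Sum>k\<in>Kq. complex_of_real (mm \<bullet> e k) * (\<Sum>j\<in>I0. c j * of_int (a j k) * Y j))"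
      using E by simp
    also have "\<dots> = (\<Sum>k\<in>Kq. \<Sum>j\<in>I0. c j * Y j * complex_of_real (of_int (a j k) * (mm \<bullet> e k)))"
      by (simp add: sum_distrib_left mult_ac)
    also have "\<dots> = (\<Sum>j\<in>I0. \<Sum>k\<in>Kq. c j * Y j * complex_of_real (of_int (a j k) * (mm \<bullet> e k)))"
      by (rule sum.swap)
    also have "\<dots> = (\<Sum>j\<in>I0. c j * Y j * complex_of_real (\<Sum>k\<in>Kq. of_int (a j k) * (mm \<bullet> e k)))"
      by (simp add: sum_distrib_left of_real_sum)
    also have "\<dots> = (\<Sum>j\<in>I0. c j * Y j * complex_of_real (mm \<bullet> v j))"
      using inner by simp
    also have "\<dots> = c j0 * Y j0 * complex_of_real (mm \<bullet> v j0)"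
    proof -
      have j0I: "j0 \<in> I0" using l0 by (simp add: I0_def)
      have "(\<Sum>j\<in>I0 - {j0}. c j * Y j * complex_of_real (mm \<bullet> v j)) = 0"
      proof (rule sum.neutral, rule ballI)
        fix j assume "j \<in> I0 - {j0}"
        then have "j \<in> ?S" using Ssame unfolding I0_def by blast
        then show "c j * Y j * complex_of_real (mm \<bullet> v j) = 0" using mmS by simp
      qed
      then show ?thesis using sum.remove[OF finI0 j0I, of "\<lambda>j. c j * Y j * complex_of_real (mm \<bullet> v j)"]
        by simp
    qed
    finally have "c j0 * Y j0 * complex_of_real (mm \<bullet> v j0) = 0" by simp
    then show False using cnz j0 Ynz mmj0 by simp
  qed
qed



lemma C_sbb:
  fixes v :: "nat \<Rightarrow> real^'n"
  assumes lat: "\<forall>j<m. lattice_pt (v j)" and sp: "span (v ` {..<m}) = UNIV"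
    and C: "condC v lam m u"
  shows "strongly_bulk_balanced v lam m u"
proof -
  let ?n = "CARD('n)"
  let ?\<kappa> = "kappa v lam m u"
  let ?N = "length (lev_vals v lam m u)"
  have k1: "1 \<le> ?\<kappa>" and kN: "?\<kappa> \<le> ?N" and Ak: "Aperp v lam m u ?\<kappa> = UNIV"
    using kappa_props[OF sp] by auto
  define V where "V l = v ` Low v lam m u l" for l
  have Vmono: "V a \<subseteq> V b" if "a \<le> b" for a b
    unfolding V_def using Low_mono[OF that] by (rule image_mono)
  have V0: "V 0 = {}" by (simp add: V_def Low_0)
  have AV: "Aperp v lam m u l = span (V l)" for l by (simp add: Aperp_eq V_def)
  obtain B where B: "B \<subseteq> V ?\<kappa>" "independent B" "\<forall>l\<le>?\<kappa>. V l \<subseteq> span (B \<inter> V l)"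
    using adapted_basis[of V ?\<kappa>] Vmono by (meson le_Suc_eq order_refl)
  have spanV: "span (V l) \<subseteq> span (B \<inter> V l)" if "l \<le> ?\<kappa>" for l
  proof -
    have "span (V l) \<subseteq> span (span (B \<inter> V l))" using B(3) that by (intro span_mono) blast
    then show ?thesis by (simp add: span_span)
  qed
  have spB: "span B = UNIV"
  proof -
    have "UNIV = span (V ?\<kappa>)" using Ak AV by simp
    also have "\<dots> \<subseteq> span (B \<inter> V ?\<kappa>)" by (rule spanV) simp
    also have "\<dots> \<subseteq> span B" by (intro span_mono) blast
    finally show ?thesis by blast
  qed
  have latB: "\<forall>b\<in>B. lattice_pt b"
  proof
    fix b assume "b \<in> B"
    then have "b \<in> v ` Low v lam m u ?\<kappa>" using B(1) by (auto simp: V_def)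
    then obtain j where "j \<in> Low v lam m u ?\<kappa>" "b = v j" by blast
    then show "lattice_pt b" using lat Low_sub by blast
  qed
  obtain G D coord where
    G: "bij_betw G {..<?n} B" and D: "D \<noteq> 0" "D \<in> \<int>"
    and lc: "\<And>k. linear (coord k)"
    and ci: "\<And>k w. lattice_pt w \<Longrightarrow> coord k w \<in> \<int>"
    and cq: "\<And>k w. rational_pt w \<Longrightarrow> coord k w \<in> \<rat>"
    and cG: "\<And>k k'. k < ?n \<Longrightarrow> k' < ?n \<Longrightarrow> coord k (G k') = (if k = k' then D else 0)"
    and rep: "\<And>w. w = (\<Sum>k<?n. (coord k w / D) *\<^sub>R G k)"
    using coord_system[OF B(2) spB latB] by blast
  have GB: "G k \<in> B" if "k < ?n" for k using G that by (auto simp: bij_betw_def)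
  have BG: "b \<in> G ` {..<?n}" if "b \<in> B" for b using G that by (auto simp: bij_betw_def)
  define lev where "lev k = (LEAST l. G k \<in> V l)" for k
  have LV: "lev k \<le> l \<longleftrightarrow> G k \<in> V l" if k: "k < ?n" for k l
  proof
    have ex: "G k \<in> V ?\<kappa>" using GB[OF k] B(1) by blast
    have "G k \<in> V (lev k)" unfolding lev_def by (rule LeastI[of _ ?\<kappa>]) (rule ex)
    then show "lev k \<le> l \<Longrightarrow> G k \<in> V l" using Vmono by blast
    show "G k \<in> V l \<Longrightarrow> lev k \<le> l" unfolding lev_def by (rule Least_le)
  qed
  have lev1: "1 \<le> lev k" if "k < ?n" for k
  proof (rule ccontr)
    assume "\<not> 1 \<le> lev k"
    then have "lev k \<le> 0" by simp
    then show False using LV[OF that, of 0] V0 by simp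
  qed
  have levk: "lev k \<le> ?\<kappa>" if "k < ?n" for k using LV[OF that] GB[OF that] B(1) by blast
  define e where "e k = (1 / D) *\<^sub>R G k" for k
  define a where "a j k = \<lfloor>coord k (v j)\<rfloor>" for j k
  have aint: "of_int (a j k) = coord k (v j)" if "j < m" for j k
  proof -
    have "coord k (v j) \<in> \<int>" using ci lat that by blast
    then show ?thesis unfolding a_def by (metis Ints_cases floor_of_int)
  qed
  have rep': "w = (\<Sum>k<?n. coord k w *\<^sub>R e k)" for w
  proof -
    have "w = (\<Sum>k<?n. (coord k w / D) *\<^sub>R G k)" by (rule rep)
    also have "\<dots> = (\<Sum>k<?n. coord k w *\<^sub>R e k)" by (simp add: e_def)
    finally show ?thesis .
  qed
  have ZERO: "coord k w = 0" if l: "l \<le> ?\<kappa>" and w: "w \<in> span (V l)" and k: "k < ?n" "\<not> lev k \<le> l" for l w k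
  proof -
    have "w \<in> span (B \<inter> V l)" using spanV[OF l] w by blast
    moreover have "\<forall>x\<in>B \<inter> V l. coord k x = 0"
    proof
      fix x assume x: "x \<in> B \<inter> V l"
      then obtain k' where k': "k' < ?n" "x = G k'" using BG by blast
      then have "lev k' \<le> l" using LV x by blast
      then have "k' \<noteq> k" using k by auto
      then show "coord k x = 0" using cG[OF k(1) k'(1)] k' by simp
    qed
    ultimately show ?thesis using linear_zero_span[OF lc] by blast
  qed
  have adm: "admissible_basis v lam m u e lev a"
    unfolding admissible_basis_def Let_def
  proof (intro conjI ballI allI impI)
    fix k assume k: "k < ?n"
    show "1 \<le> lev k" using lev1[OF k] .
    show "lev k \<le> ?\<kappa>" using levk[OF k] .
    show "rational_pt (e k)"
    proof -
      have "lattice_pt (G k)" using latB GB[OF k] by blast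
      then have "G k $ i \<in> \<rat>" for i unfolding lattice_pt_def using Ints_subset_Rats by blast
      moreover have "D \<in> \<rat>" using D(2) Ints_subset_Rats by blast
      ultimately show ?thesis unfolding e_def rational_pt_def
        by (simp add: Rats_divide)
    qed
  next
    fix j assume j: "j < m"
    show "v j = (\<Sum>k<?n. of_int (a j k) *\<^sub>R e k)"
      using rep'[of "v j"] aint[OF j] by simp
  next
    fix l assume l: "l \<in> {1..?\<kappa>}"
    let ?K = "{k. k < ?n \<and> lev k \<le> l}"
    {
      fix k assume k: "k \<in> ?K"
      then have "G k \<in> V l" using LV by blast
      then have "G k \<in> span (V l)" by (rule span_base)
      then show "e k \<in> Aperp v lam m u l" unfolding e_def AV by (rule span_mul)
    }
    {
      fix q assume q: "(\<forall>k\<in>?K. q k \<in> \<rat>) \<and> (\<Sum>k\<in>?K. q k *\<^sub>R e k) = 0"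
      fix k0 assume k0: "k0 \<in> ?K"
      have "0 = coord k0 (\<Sum>k\<in>?K. q k *\<^sub>R e k)" using q linear_0[OF lc] by simp
      also have "\<dots> = (\<Sum>k\<in>?K. q k * ((1 / D) * coord k0 (G k)))"
        by (simp add: linear_sum[OF lc] linear_scale[OF lc] e_def)
      also have "\<dots> = (\<Sum>k\<in>?K. (if k = k0 then q k0 else 0))"
        using k0 D(1) by (intro sum.cong) (auto simp: cG)
      also have "\<dots> = q k0" using k0 by simp
      finally show "q k0 = 0" by simp
    }
    {
      fix w assume w: "w \<in> Aperp v lam m u l" and rw: "rational_pt w"
      show "\<exists>q. (\<forall>k\<in>?K. q k \<in> \<rat>) \<and> w = (\<Sum>k\<in>?K. q k *\<^sub>R e k)"
      proof (intro exI conjI)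
        show "\<forall>k\<in>?K. coord k w \<in> \<rat>" using cq rw by blast
        have "w = (\<Sum>k<?n. coord k w *\<^sub>R e k)" by (rule rep')
        also have "\<dots> = (\<Sum>k\<in>?K. coord k w *\<^sub>R e k)"
        proof (rule sum.mono_neutral_right)
          show "finite {..<?n}" by simp
          show "?K \<subseteq> {..<?n}" by auto
          show "\<forall>k\<in>{..<?n} - ?K. coord k w *\<^sub>R e k = 0"
          proof
            fix k assume k: "k \<in> {..<?n} - ?K"
            have "coord k w = 0"
              by (rule ZERO[of l w k]) (use l w k AV in auto)
            then show "coord k w *\<^sub>R e k = 0" by simp
          qed
        qed
        finally show "w = (\<Sum>k\<in>?K. coord k w *\<^sub>R e k)" .
      qed
    }
  qed
  define P where "P \<rho> \<longleftrightarrow> (\<forall>l\<in>{1..?\<kappa>}. \<forall>k<?n. lev k = l \<longrightarrow>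
        (\<Sum>j\<in>lev_I v lam m u l. \<rho> j * of_int (a j k)) = (0::real))" for \<rho>
  have P0: "P (\<lambda>_. 0)" by (simp add: P_def)
  have Padd: "P (\<lambda>i. c i + d i)" if "P c" "P d" for c d
    using that by (simp add: P_def distrib_right sum.distrib)
  have Pscale: "P (\<lambda>i. s * c i)" if "P c" for c s
    using that by (simp add: P_def mult.assoc sum_distrib_left[symmetric])
  have exj: "\<forall>j\<in>{..<m}. \<exists>\<rho>. P \<rho> \<and> \<rho> j \<noteq> 0"
  proof
    fix j assume "j \<in> {..<m}"
    then have jm: "j < m" by simp
    obtain l where l: "1 \<le> l" "l \<le> ?N" "j \<in> lev_I v lam m u l" using lev_ex[OF jm] by blast
    define I where "I = lev_I v lam m u l"
    have finI: "finite I" unfolding I_def by (rule finite_subset[OF lev_I_sub]) simp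
    have "v j \<in> span (v ` ({i. i < m \<and> ell v lam i u < ell v lam j u} \<union>
      ({i. i < m \<and> ell v lam i u = ell v lam j u} - {j})))" using C jm unfolding condC_def by blast
    then have "v j \<in> span (v ` Low v lam m u (l - 1) \<union> v ` (I - {j}))"
      unfolding lev_below[OF l] lev_I_same[OF l(3)] I_def image_Un .
    then obtain w z where wz: "v j = w + z" "w \<in> span (V (l - 1))" "z \<in> span (v ` (I - {j}))"
      unfolding span_Un V_def by blast
    obtain r where r: "z = (\<Sum>i\<in>I - {j}. r i *\<^sub>R v i)"
      using span_image_sum[OF _ wz(3)] finI by blast
    define \<rho> where "\<rho> i = (if i = j then 1 else if i \<in> I - {j} then - r i else 0)" for i
    have "P \<rho>"
      unfolding P_def
    proof (intro ballI allI impI)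
      fix l' k assume l': "l' \<in> {1..?\<kappa>}" and k: "k < ?n" and lk: "lev k = l'"
      show "(\<Sum>i\<in>lev_I v lam m u l'. \<rho> i * of_int (a i k)) = 0"
      proof (cases "l' = l")
        case False
        have "lev_I v lam m u l' \<inter> I = {}"
          unfolding I_def by (rule lev_I_disj) (use l' kN l False in auto)
        then have "\<forall>i\<in>lev_I v lam m u l'. \<rho> i = 0" using l(3) unfolding \<rho>_def I_def by auto
        then show ?thesis by simp
      next
        case True
        have jI: "j \<in> I" using l by (simp add: I_def)
        have Im: "\<forall>i\<in>I. i < m" using lev_I_sub unfolding I_def by blast
        have "(\<Sum>i\<in>I. \<rho> i * of_int (a i k)) = \<rho> j * of_int (a j k) + (\<Sum>i\<in>I - {j}. \<rho> i * of_int (a i k))"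
          by (rule sum.remove[OF finI jI])
        also have "\<dots> = coord k (v j) - (\<Sum>i\<in>I - {j}. r i * coord k (v i))"
          using aint Im jm by (simp add: \<rho>_def sum_negf)
        also have "coord k (v j) = coord k w + (\<Sum>i\<in>I - {j}. r i * coord k (v i))"
          using wz(1) r by (simp add: linear_add[OF lc] linear_sum[OF lc] linear_scale[OF lc])
        also have "coord k w = 0"
          by (rule ZERO[of "l - 1" w k]) (use wz(2) k lk True l' in auto)
        finally show ?thesis using True by (simp add: I_def)
      qed
    qed
    moreover have "\<rho> j \<noteq> 0" by (simp add: \<rho>_def)
    ultimately show "\<exists>\<rho>. P \<rho> \<and> \<rho> j \<noteq> 0" by blast
  qed
  obtain c0 where c0: "P c0" "\<forall>j\<in>{..<m}. c0 j \<noteq> 0"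
    using generic_nonzero[of P "{..<m}", OF P0 Padd Pscale _ exj] by blast
  define c where "c j = complex_of_real (c0 j)" for j
  define y :: "nat \<Rightarrow> complex" where "y k = 1" for k
  have ynz: "\<forall>k<?n. y k \<noteq> 0" by (simp add: y_def)
  have ym: "ymono a ?n j y = 1" for j by (simp add: ymono_def y_def)
  show ?thesis
    unfolding strongly_bulk_balanced_def
  proof (intro exI conjI)
    show "admissible_basis v lam m u e lev a" by (rule adm)
    show "\<forall>j<m. c j \<noteq> 0" using c0(2) by (simp add: c_def)
    show "\<forall>k<?n. y k \<noteq> 0" by (rule ynz)
    show "\<forall>l\<in>{1..?\<kappa>}. \<forall>k<?n. lev k = l \<longrightarrow>
            y k * deriv (\<lambda>t. Fc v lam m u a c l (y(k := t))) (y k) = 0"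
    proof (intro ballI allI impI)
      fix l k assume l: "l \<in> {1..?\<kappa>}" and k: "k < ?n" and lk: "lev k = l"
      have "y k * deriv (\<lambda>t. Fc v lam m u a c l (y(k := t))) (y k)
          = (\<Sum>j\<in>lev_I v lam m u l. c j * of_int (a j k) * ymono a ?n j y)"
        by (rule Fc_deriv[OF ynz k])
      also have "\<dots> = complex_of_real (\<Sum>j\<in>lev_I v lam m u l. c0 j * of_int (a j k))"
        by (simp add: ym c_def of_real_sum)
      also have "(\<Sum>j\<in>lev_I v lam m u l. c0 j * of_int (a j k)) = 0"
        using c0(1) l k lk unfolding P_def by blast
      finally show "y k * deriv (\<lambda>t. Fc v lam m u a c l (y(k := t))) (y k) = 0" by (simp only: of_real_0)
    qed
  qed
qed



lemma notC_witness:
  fixes v :: "nat \<Rightarrow> real^'n"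
  assumes lat: "\<forall>j<m. lattice_pt (v j)" and sp: "span (v ` {..<m}) = UNIV"
    and nC: "\<not> condC v lam m u"
  shows "\<exists>mm. primitive_pt mm \<and>
           (\<exists>J\<subseteq>{..<m}. dim (span (v ` J)) = CARD('n) - 1 \<and> (\<forall>w\<in>span (v ` J). mm \<bullet> w = 0)) \<and>
           u \<notin> trop v lam m mm"
proof -
  obtain j0 where j0: "j0 < m" and nin: "v j0 \<notin> span (v ` ({i. i < m \<and> ell v lam i u < ell v lam j0 u} \<union>
      ({i. i < m \<and> ell v lam i u = ell v lam j0 u} - {j0})))"
    using nC unfolding condC_def by blast
  let ?S = "{i. i < m \<and> ell v lam i u < ell v lam j0 u} \<union> ({i. i < m \<and> ell v lam i u = ell v lam j0 u} - {j0})"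
  have Ssub: "?S \<subseteq> {..<m}" by auto
  obtain mm where mm: "primitive_pt mm"
    "\<exists>J\<subseteq>{..<m}. dim (span (v ` J)) = CARD('n) - 1 \<and> (\<forall>w\<in>span (v ` J). mm \<bullet> w = 0)"
    "\<forall>i\<in>?S. mm \<bullet> v i = 0" "mm \<bullet> v j0 \<noteq> 0"
    using NC[OF lat sp j0 Ssub nin] by blast
  have "u \<notin> trop v lam m mm"
  proof (rule notC_trop[OF _ j0])
    show "mm \<noteq> 0" using mm(1) by (simp add: primitive_pt_def)
    show "mm \<bullet> v i = 0" if "i < m" "ell v lam i u < ell v lam j0 u" for i using mm(3) that by blast
    show "mm \<bullet> v i = 0" if "i < m" "ell v lam i u = ell v lam j0 u" "i \<noteq> j0" for i using mm(3) that by blast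
    show "mm \<bullet> v j0 \<noteq> 0" by (rule mm(4))
  qed
  then show ?thesis using mm(1,2) by blast
qed

theorem theoremA:
  fixes v :: "nat \<Rightarrow> real^'n" and lam :: "nat \<Rightarrow> real" and m :: nat and u :: "real^'n"
  assumes "delzant_presentation v lam m"
    and "u \<in> interior (polytope v lam m)"
  shows "(strongly_bulk_balanced v lam m u \<longleftrightarrow> (\<forall>mm. lattice_pt mm \<longrightarrow> u \<in> trop v lam m mm))
       \<and> ((\<forall>mm. lattice_pt mm \<longrightarrow> u \<in> trop v lam m mm) \<longleftrightarrow>
          (\<forall>mm. primitive_pt mm \<and>
                (\<exists>J\<subseteq>{..<m}. dim (span (v ` J)) = CARD('n) - 1 \<and>
                              (\<forall>w\<in>span (v ` J). mm \<bullet> w = 0))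
                \<longrightarrow> u \<in> trop v lam m mm))"
proof -
  have bd: "bounded (polytope v lam m)" and prim: "\<forall>j<m. primitive_pt (v j)"
    using assms(1) unfolding delzant_presentation_def by auto
  have lat: "\<forall>j<m. lattice_pt (v j)" using prim by (simp add: primitive_pt_def)
  have uP: "u \<in> polytope v lam m" using assms(2) interior_subset by blast
  have sp: "span (v ` {..<m}) = UNIV" by (rule normals_span[OF bd uP])
  have E1: "strongly_bulk_balanced v lam m u \<longleftrightarrow> condC v lam m u"
    using sbb_C[OF lat sp] C_sbb[OF lat sp] by blast
  have E2: "(\<forall>mm. lattice_pt mm \<longrightarrow> u \<in> trop v lam m mm) \<longleftrightarrow> condC v lam m u"
  proof
    assume h: "\<forall>mm. lattice_pt mm \<longrightarrow> u \<in> trop v lam m mm"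
    show "condC v lam m u"
    proof (rule ccontr)
      assume "\<not> condC v lam m u"
      then obtain mm where "primitive_pt mm" "u \<notin> trop v lam m mm"
        using notC_witness[OF lat sp] by blast
      then show False using h by (simp add: primitive_pt_def)
    qed
  next
    assume "condC v lam m u"
    then show "\<forall>mm. lattice_pt mm \<longrightarrow> u \<in> trop v lam m mm"
      using C_trop[OF _ sp] unfolding condC_def by blast
  qed
  have E3: "(\<forall>mm. primitive_pt mm \<and>
                (\<exists>J\<subseteq>{..<m}. dim (span (v ` J)) = CARD('n) - 1 \<and>
                              (\<forall>w\<in>span (v ` J). mm \<bullet> w = 0))
                \<longrightarrow> u \<in> trop v lam m mm) \<Longrightarrow> condC v lam m u"
  proof (rule ccontr)
    assume h: "\<forall>mm. primitive_pt mm \<and>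
                (\<exists>J\<subseteq>{..<m}. dim (span (v ` J)) = CARD('n) - 1 \<and>
                              (\<forall>w\<in>span (v ` J). mm \<bullet> w = 0))
                \<longrightarrow> u \<in> trop v lam m mm"
    assume "\<not> condC v lam m u"
    then obtain mm where "primitive_pt mm"
      "\<exists>J\<subseteq>{..<m}. dim (span (v ` J)) = CARD('n) - 1 \<and> (\<forall>w\<in>span (v ` J). mm \<bullet> w = 0)"
      "u \<notin> trop v lam m mm"
      using notC_witness[OF lat sp] by blast
    then show False using h by blast
  qed
  have E4: "(\<forall>mm. lattice_pt mm \<longrightarrow> u \<in> trop v lam m mm) \<Longrightarrow>
           (\<forall>mm. primitive_pt mm \<and>
                (\<exists>J\<subseteq>{..<m}. dim (span (v ` J)) = CARD('n) - 1 \<and>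
                              (\<forall>w\<in>span (v ` J). mm \<bullet> w = 0))
                \<longrightarrow> u \<in> trop v lam m mm)"
    by (simp add: primitive_pt_def)
  show ?thesis using E1 E2 E3 E4 by blast
qed


end
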